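(* Let $0<\alpha<1$ and $c>0$. With probability 1 there exists $n_0(\omega)$ such that for all $n\ge n_0$, all integers $0\le j\le n-n^\alpha$ and all integers $x$ with $|x|\le c\log n$, $$\xi(S_j+x,n)=\xi(S_j+x,\infty).$$
   Context: Let $0<q<p<1$ with $p+q=1$. Let $X_1,X_2,\dots$ be i.i.d. with $\mathbf P(X_1=1)=p$, $\mathbf P(X_1=-1)=q$, $S_0=0$, $S_n=X_1+\dots+X_n$. For $y\in\mathbb Z$, $n\ge1$, $\xi(y,n)=\#\{k:0<k\le n,\ S_k=y\}$ and $\xi(y,\infty)=\lim_n\xi(y,n)$. *)

theory Defs
  imports "HOL-Probability.Probability"
begin

text \<open>Partial sums S_n = X_1 + ... + X_n (S_0 = 0); the steps are indexed from 1.\<close>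
definition walk :: "(nat \<Rightarrow> 'a \<Rightarrow> int) \<Rightarrow> nat \<Rightarrow> 'a \<Rightarrow> int" where
  "walk X n \<omega> = (\<Sum>k\<in>{1..n}. X k \<omega>)"

definition loctime :: "(nat \<Rightarrow> 'a \<Rightarrow> int) \<Rightarrow> int \<Rightarrow> nat \<Rightarrow> 'a \<Rightarrow> nat" where
  "loctime X y n \<omega> = card {k. 0 < k \<and> k \<le> n \<and> walk X k \<omega> = y}"

text \<open>xi(y,infinity) = lim_n xi(y,n), the limit of a nondecreasing sequence, in enat.\<close>
definition loctime_inf :: "(nat \<Rightarrow> 'a \<Rightarrow> int) \<Rightarrow> int \<Rightarrow> 'a \<Rightarrow> enat" where
  "loctime_inf X y \<omega> = (SUP n. enat (loctime X y n \<omega>))"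

end

theory Submission
  imports Defs "HOL-Real_Asymp.Real_Asymp"
begin

lemma walk_split:
  assumes "j \<le> k"
  shows "walk X k \<omega> = walk X j \<omega> + (\<Sum>i\<in>{Suc j..k}. X i \<omega>)"
  using assms
proof (induction k rule: dec_induct)
  case base
  then show ?case by simp
next
  case (step k)
  have "walk X (Suc k) \<omega> = walk X k \<omega> + X (Suc k) \<omega>"
    by (simp add: walk_def)
  moreover have "(\<Sum>i\<in>{Suc j..Suc k}. X i \<omega>) = (\<Sum>i\<in>{Suc j..k}. X i \<omega>) + X (Suc k) \<omega>"
    using step.hyps by (simp add: sum.cl_ivl_Suc)
  ultimately show ?case using step.IH by simp
qed

lemma loctime_stable:
  assumes "\<And>k. k > n \<Longrightarrow> walk X k \<omega> \<noteq> y"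
  shows "enat (loctime X y n \<omega>) = loctime_inf X y \<omega>"
proof -
  have le: "loctime X y m \<omega> \<le> loctime X y n \<omega>" for m
    unfolding loctime_def
  proof (rule card_mono)
    show "finite {k. 0 < k \<and> k \<le> n \<and> walk X k \<omega> = y}"
      by (rule finite_subset[of _ "{..n}"]) auto
  qed (use assms in \<open>auto simp: not_less[symmetric]\<close>)
  have "loctime_inf X y \<omega> \<le> enat (loctime X y n \<omega>)"
    unfolding loctime_inf_def by (rule SUP_least) (use le in auto)
  moreover have "enat (loctime X y n \<omega>) \<le> loctime_inf X y \<omega>"
    unfolding loctime_inf_def by (rule SUP_upper) auto
  ultimately show ?thesis by (rule antisym[rotated])
qed

context prob_space
begin

lemma step_facts:
  fixes X :: "nat \<Rightarrow> 'a \<Rightarrow> int" and p q :: real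
  assumes ind: "indep_vars (\<lambda>_. count_space UNIV) X {1..}"
    and pq: "p + q = 1"
    and hp: "\<And>i. i \<ge> 1 \<Longrightarrow> measure M {\<omega> \<in> space M. X i \<omega> = 1} = p"
    and hq: "\<And>i. i \<ge> 1 \<Longrightarrow> measure M {\<omega> \<in> space M. X i \<omega> = -1} = q"
    and i: "i \<ge> 1"
  shows "(\<lambda>\<omega>. real_of_int (X i \<omega>)) \<in> borel_measurable M"
    and "AE \<omega> in M. real_of_int (X i \<omega>) \<in> {-1..1}"
    and "expectation (\<lambda>\<omega>. real_of_int (X i \<omega>)) = p - q"
proof -
  have mX: "X i \<in> measurable M (count_space UNIV)"
    using ind i unfolding indep_vars_def by auto
  show mY: "(\<lambda>\<omega>. real_of_int (X i \<omega>)) \<in> borel_measurable M"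
    by (rule measurable_compose[OF mX]) simp
  define A1 where "A1 = {\<omega> \<in> space M. X i \<omega> = 1}"
  define A2 where "A2 = {\<omega> \<in> space M. X i \<omega> = -1}"
  have s1: "A1 \<in> sets M" unfolding A1_def using mX by measurable
  have s2: "A2 \<in> sets M" unfolding A2_def using mX by measurable
  have "prob (A1 \<union> A2) = prob A1 + prob A2"
    by (rule finite_measure_Union[OF s1 s2]) (auto simp: A1_def A2_def)
  also have "\<dots> = 1" using hp[OF i] hq[OF i] pq by (simp add: A1_def A2_def)
  finally have "AE \<omega> in M. \<omega> \<in> A1 \<union> A2"
    using prob_eq_1[of "A1 \<union> A2"] s1 s2 by auto
  then have ae: "AE \<omega> in M. X i \<omega> = 1 \<or> X i \<omega> = -1"
    by (auto simp: A1_def A2_def)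
  show "AE \<omega> in M. real_of_int (X i \<omega>) \<in> {-1..1}"
    using ae by eventually_elim auto
  have "expectation (\<lambda>\<omega>. real_of_int (X i \<omega>)) = expectation (\<lambda>\<omega>. indicator A1 \<omega> - indicator A2 \<omega> :: real)"
  proof (rule integral_cong_AE[OF mY])
    show "(\<lambda>\<omega>. indicator A1 \<omega> - indicator A2 \<omega> :: real) \<in> borel_measurable M"
      using s1 s2 by measurable
    show "AE \<omega> in M. real_of_int (X i \<omega>) = indicator A1 \<omega> - indicator A2 \<omega>"
      using ae AE_space by eventually_elim (auto simp: A1_def A2_def indicator_def)
  qed
  also have "\<dots> = prob A1 - prob A2"
    using s1 s2 sets.sets_into_space[OF s1] sets.sets_into_space[OF s2]
    by (subst Bochner_Integration.integral_diff)
       (auto simp: Int_absorb2 less_top[symmetric] intro!: integrable_real_indicator)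
  also have "\<dots> = p - q" using hp[OF i] hq[OF i] by (simp add: A1_def A2_def)
  finally show "expectation (\<lambda>\<omega>. real_of_int (X i \<omega>)) = p - q" .
qed

lemma hoeff:
  fixes X :: "nat \<Rightarrow> 'a \<Rightarrow> int" and p q :: real
  assumes ind: "indep_vars (\<lambda>_. count_space UNIV) X {1..}"
    and pq: "p + q = 1"
    and hp: "\<And>i. i \<ge> 1 \<Longrightarrow> measure M {\<omega> \<in> space M. X i \<omega> = 1} = p"
    and hq: "\<And>i. i \<ge> 1 \<Longrightarrow> measure M {\<omega> \<in> space M. X i \<omega> = -1} = q"
    and jk: "j < k" and a: "a \<le> real (k - j) * (p - q)"
  shows "prob {\<omega> \<in> space M. (\<Sum>i\<in>{Suc j..k}. real_of_int (X i \<omega>)) \<le> a}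
           \<le> exp (- 2 * (real (k - j) * (p - q) - a)\<^sup>2 / (4 * real (k - j)))"
proof -
  let ?I = "{Suc j..k}"
  let ?Y = "\<lambda>i \<omega>. real_of_int (X i \<omega>)"
  have sub: "?I \<subseteq> {1..}" by auto
  interpret H: Hoeffding_ineq M ?I ?Y "\<lambda>_. -1" "\<lambda>_. 1" "real (k - j) * (p - q)"
  proof unfold_locales
    show "finite ?I" by simp
    show "indep_vars (\<lambda>_. borel) ?Y ?I"
      by (rule indep_vars_compose2[OF indep_vars_subset[OF ind sub]]) simp
    show "AE x in M. ?Y i x \<in> {-1..1}" if "i \<in> ?I" for i
      using step_facts(2)[OF ind pq hp hq] that by auto
    have "(\<Sum>i\<in>?I. expectation (?Y i)) = (\<Sum>i\<in>?I. p - q)"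
      by (rule sum.cong) (use step_facts(3)[OF ind pq hp hq] in auto)
    then show "real (k - j) * (p - q) \<equiv> \<Sum>i\<in>?I. expectation (?Y i)" by simp
  qed
  have e: "real (k - j) * (p - q) - a \<ge> 0" using a by simp
  have "(\<Sum>i\<in>?I. (1 - (-1::real))\<^sup>2) = 4 * real (k - j)" by simp
  moreover have "(\<Sum>i\<in>?I. (1 - (-1::real))\<^sup>2) > 0" using jk by simp
  moreover have "{\<omega> \<in> space M. (\<Sum>i\<in>?I. ?Y i \<omega>) \<le> a} =
      {\<omega> \<in> space M. (\<Sum>i\<in>?I. ?Y i \<omega>) \<le> real (k - j) * (p - q) - (real (k - j) * (p - q) - a)}"
    by simp
  ultimately show ?thesis
    using H.Hoeffding_ineq_le[OF e] by (simp add: mult.commute)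
qed

end

theorem lemma7p2:
  fixes M :: "'a measure" and X :: "nat \<Rightarrow> 'a \<Rightarrow> int"
    and p q \<alpha> c :: real
  assumes "prob_space M"
    and "0 < q" and "q < p" and "p < 1" and "p + q = 1"
    and "prob_space.indep_vars M (\<lambda>_. count_space UNIV) X {1..}"
    and "\<And>i. i \<ge> 1 \<Longrightarrow> measure M {\<omega> \<in> space M. X i \<omega> = 1} = p"
    and "\<And>i. i \<ge> 1 \<Longrightarrow> measure M {\<omega> \<in> space M. X i \<omega> = -1} = q"
    and "0 < \<alpha>" and "\<alpha> < 1" and "0 < c"
  shows "AE \<omega> in M. \<exists>n0::nat. \<forall>n\<ge>n0. \<forall>j::nat. \<forall>x::int.
           real j \<le> real n - real n powr \<alpha> \<longrightarrow> real_of_int \<bar>x\<bar> \<le> c * ln (real n) \<longrightarrow>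
           enat (loctime X (walk X j \<omega> + x) n \<omega>) = loctime_inf X (walk X j \<omega> + x) \<omega>"
proof -
  interpret P: prob_space M by fact
  note ind = assms(6) and pq = assms(5) and hp = assms(7) and hq = assms(8)
  define d where "d = p - q"
  have d: "d > 0" using assms(3) by (simp add: d_def)
  have c: "c > 0" "\<alpha> > 0" "\<alpha> < 1" using assms(9-11) by auto
  define g where "g k = (real k / 2) powr \<alpha>" for k :: nat
  define A where "A j k = {\<omega>\<in>space M. (\<Sum>i\<in>{Suc j..k}. real_of_int (X i \<omega>)) \<le> c * ln (real k)}"
    for j k :: nat
  define J where "J k = {j. j \<le> k \<and> g k \<le> real (k - j)}" for k
  define E where "E k = (\<Union>j\<in>J k. A j k)" for k
  have mY: "(\<lambda>\<omega>. real_of_int (X i \<omega>)) \<in> borel_measurable M" if "i \<ge> 1" for i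
    using P.step_facts(1)[OF ind pq hp hq that] .
  have sA: "A j k \<in> sets M" for j k
  proof -
    have [measurable]: "(\<lambda>\<omega>. \<Sum>i\<in>{Suc j..k}. real_of_int (X i \<omega>)) \<in> borel_measurable M"
      by (rule borel_measurable_sum) (use mY in auto)
    show ?thesis unfolding A_def by measurable
  qed
  have finJ: "finite (J k)" for k
    by (rule finite_subset[of _ "{..k}"]) (auto simp: J_def)
  have sE: "E k \<in> sets M" for k
    unfolding E_def using sA finJ by auto
  have ev1: "eventually (\<lambda>k. 2 * c * ln (real k) \<le> d * g k) sequentially"
    unfolding g_def using c d by real_asymp
  have C: "d^2/8 > 0" using d by simp
  have ev2: "eventually (\<lambda>k. (real k + 1) * exp (- (d^2/8) * g k) \<le> 1 / (real k)^2) sequentially"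
    unfolding g_def using c C by real_asymp
  have bound: "eventually (\<lambda>k. P.prob (E k) \<le> (real k + 1) * exp (- (d^2/8) * g k)) sequentially"
    using ev1 eventually_ge_at_top[of 1]
  proof eventually_elim
    case (elim k)
    have gpos: "g k > 0" using elim(2) by (simp add: g_def)
    have each: "P.prob (A j k) \<le> exp (- (d^2/8) * g k)" if "j \<in> J k" for j
    proof -
      have m: "g k \<le> real (k - j)" "j \<le> k" using that by (auto simp: J_def)
      have jk: "j < k"
      proof (rule ccontr)
        assume "\<not> j < k"
        then have "j = k" using m by simp
        then show False using m gpos by simp
      qed
      define mm where "mm = real (k - j)"
      have mpos: "mm > 0" using jk by (simp add: mm_def)
      have lnk: "0 \<le> ln (real k)" using elim(2) by simp
      have "d * g k \<le> d * mm" using m d by (simp add: mm_def)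
      then have a1: "c * ln (real k) \<le> d * mm / 2" using elim(1) by simp
      have a: "c * ln (real k) \<le> real (k - j) * (p - q)"
        using a1 d mpos mult_nonneg_nonneg[OF less_imp_le[OF c(1)] lnk]
        by (simp add: mm_def d_def mult.commute)
      have H: "P.prob (A j k) \<le> exp (- 2 * (real (k - j) * (p - q) - c * ln (real k))\<^sup>2 / (4 * real (k - j)))"
        unfolding A_def by (rule P.hoeff[OF ind pq hp hq jk a])
      have b1: "mm * d / 2 \<le> mm * (p - q) - c * ln (real k)"
      proof -
        have "mm * d / 2 \<le> mm * d - c * ln (real k)" using a1 by (simp add: mult.commute)
        then show ?thesis by (simp add: d_def)
      qed
      have b0: "0 \<le> mm * d / 2" using mpos d by simp
      have sq: "(mm * d / 2)^2 \<le> (mm * (p - q) - c * ln (real k))^2"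
        by (rule power_mono[OF b1 b0])
      have "(d^2/8) * g k \<le> (d^2/8) * mm"
        using m by (intro mult_left_mono) (auto simp: mm_def)
      also have "\<dots> = 2 * (mm * d / 2)^2 / (4 * mm)"
        using mpos by (simp add: field_simps power2_eq_square)
      also have "\<dots> \<le> 2 * (mm * (p - q) - c * ln (real k))^2 / (4 * mm)"
        using sq mpos by (intro divide_right_mono) auto
      finally have "- 2 * (mm * (p - q) - c * ln (real k))^2 / (4 * mm) \<le> - (d^2/8) * g k"
        by simp
      then have "exp (- 2 * (mm * (p - q) - c * ln (real k))^2 / (4 * mm)) \<le> exp (- (d^2/8) * g k)"
        by (rule exp_mono)
      then show ?thesis using H[folded mm_def] by (rule order_trans[rotated])
    qed
    have "P.prob (E k) \<le> (\<Sum>j\<in>J k. P.prob (A j k))"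
      unfolding E_def by (rule P.finite_measure_subadditive_finite) (use finJ sA in auto)
    also have "\<dots> \<le> (\<Sum>j\<in>J k. exp (- (d^2/8) * g k))"
      by (rule sum_mono) (rule each)
    also have "\<dots> = real (card (J k)) * exp (- (d^2/8) * g k)" by simp
    also have "\<dots> \<le> (real k + 1) * exp (- (d^2/8) * g k)"
    proof (rule mult_right_mono)
      have "card (J k) \<le> card {..k}" by (rule card_mono) (auto simp: J_def)
      then show "real (card (J k)) \<le> real k + 1" by simp
    qed simp
    finally show ?case .
  qed
  have summ: "summable (\<lambda>k. P.prob (E k))"
  proof (rule summable_comparison_test_ev)
    show "eventually (\<lambda>k. norm (P.prob (E k)) \<le> 1 / (real k)^2) sequentially"
      using bound ev2 by eventually_elim simp
    show "summable (\<lambda>k. 1 / (real k)^2)"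
      using inverse_power_summable[of 2, where 'a=real] by (simp add: inverse_eq_divide)
  qed
  have BC: "AE \<omega> in M. eventually (\<lambda>k. \<omega> \<in> space M - E k) sequentially"
    by (rule borel_cantelli_AE1[OF sE]) (use summ in \<open>auto simp: less_top[symmetric]\<close>)
  show ?thesis using BC
  proof eventually_elim
    case (elim \<omega>)
    then obtain K where K: "\<And>k. k \<ge> K \<Longrightarrow> \<omega> \<in> space M - E k"
      by (auto simp: eventually_sequentially)
    have key: "c * ln (real k) < real_of_int (walk X k \<omega> - walk X j \<omega>)"
      if "k \<ge> K" "j \<le> k" "g k \<le> real (k - j)" for k j
    proof -
      have "j \<in> J k" using that by (simp add: J_def)
      then have "\<omega> \<notin> A j k" "\<omega> \<in> space M" using K[OF \<open>k \<ge> K\<close>] by (auto simp: E_def)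
      then have "c * ln (real k) < (\<Sum>i\<in>{Suc j..k}. real_of_int (X i \<omega>))"
        unfolding A_def by auto
      also have "\<dots> = real_of_int (walk X k \<omega> - walk X j \<omega>)"
        using walk_split[OF \<open>j \<le> k\<close>, of X \<omega>] by simp
      finally show ?thesis .
    qed
    show ?case
    proof (intro exI[of _ "max K 2"] allI impI)
      fix n j :: nat and x :: int
      assume n: "max K 2 \<le> n" and hj: "real j \<le> real n - real n powr \<alpha>"
        and hx: "real_of_int \<bar>x\<bar> \<le> c * ln (real n)"
      show "enat (loctime X (walk X j \<omega> + x) n \<omega>) = loctime_inf X (walk X j \<omega> + x) \<omega>"
      proof (rule loctime_stable)
        fix k assume kn: "n < k"
        have "0 \<le> real n powr \<alpha>" by simp
        then have jn: "j \<le> n" using hj by linarith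
        have gk: "g k \<le> real (k - j)"
        proof (cases "real k / 2 \<le> real n")
          case True
          have "g k \<le> real n powr \<alpha>" unfolding g_def
            by (rule powr_mono2) (use True c in auto)
          also have "\<dots> \<le> real (k - j)" using hj kn jn by (simp add: of_nat_diff)
          finally show ?thesis .
        next
          case False
          have k2: "1 \<le> real k / 2" using n kn by auto
          have "g k \<le> (real k / 2) powr 1" unfolding g_def
            by (rule powr_mono) (use k2 c in auto)
          also have "\<dots> = real k / 2" using k2 by simp
          also have "\<dots> \<le> real (k - j)" using False jn kn by (simp add: of_nat_diff)
          finally show ?thesis .
        qed
        have "ln (real n) \<le> ln (real k)" using n kn by simp
        then have "c * ln (real n) \<le> c * ln (real k)" using c by simp
        then have "real_of_int x < real_of_int (walk X k \<omega> - walk X j \<omega>)"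
          using key[of k j] gk jn kn n hx by auto
        then show "walk X k \<omega> \<noteq> walk X j \<omega> + x" by auto
      qed
    qed
  qed
qed

end
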